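(* Let $\mu_t(s,a)=\mathbb P_{\pi^{\mathrm{expl}}}(s_t=s,\ a_t=a)$ for $t\in[T]$, $(s,a)\in\mathcal S\times\mathcal A$. Suppose that for every $(s,a)$ there is some $t$ with $\mu_t(s,a)>0$. Then the covering length $L$ satisfies $$\frac{\log 2}{2\min_{(s,a)\in\mathcal S\times\mathcal A}\sum_{t\in[T]}\mu_t(s,a)}\ \le\ L\ \le\ \left\lceil\frac{\log(2SA)}{\min_{(s,a)\in\mathcal S\times\mathcal A}\max_{t\in[T]}\mu_t(s,a)}\right\rceil .$$
   Context: Deterministic finite-horizon MDP $\mathcal M=(\mathcal S,\mathcal A,T,s_1,f,R)$ with finite state set of size $S=|\mathcal S|$ and action set of size $A=|\mathcal A|$, start state $s_1$, transitions $s_{t+1}=f(s_t,a_t)$, steps $t\in[T]$. $\pi^{\mathrm{expl}}$ is a fixed exploration policy (maps $\pi^{\mathrm{expl}}_t:\mathcal S\to\Delta(\mathcal A)$), and $\mathbb P_{\pi^{\mathrm{expl}}}$ is the law of an episode from $s_1$ following it. The covering length $L$ is the least number of independent episodes run with $\pi^{\mathrm{expl}}$ such that, with probability at least $1/2$, every pair $(s,a)\in\mathcal S\times\mathcal A$ is visited (at some step of some episode). *)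

theory Defs
  imports "HOL-Probability.Probability"
begin

text \<open>Law of an episode of the deterministic MDP with transition map f, following the
(step-dependent, randomized) policy pol, from step t onwards for n remaining steps, starting at s.\<close>
fun episode_from :: "(nat \<Rightarrow> 's \<Rightarrow> 'a pmf) \<Rightarrow> ('s \<Rightarrow> 'a \<Rightarrow> 's) \<Rightarrow> nat \<Rightarrow> nat \<Rightarrow> 's \<Rightarrow> ('s \<times> 'a) list pmf" where
  "episode_from pol f t 0 s = return_pmf []"
| "episode_from pol f t (Suc n) s =
     bind_pmf (pol t s) (\<lambda>a. bind_pmf (episode_from pol f (Suc t) n (f s a)) (\<lambda>rest. return_pmf ((s, a) # rest)))"

text \<open>Full episode over steps 1..T from start state s1; the list entry with index t-1 is (s_t,a_t).\<close>
definition episode :: "(nat \<Rightarrow> 's \<Rightarrow> 'a pmf) \<Rightarrow> ('s \<Rightarrow> 'a \<Rightarrow> 's) \<Rightarrow> nat \<Rightarrow> 's \<Rightarrow> ('s \<times> 'a) list pmf" where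
  "episode pol f T s1 = episode_from pol f 1 T s1"

definition occupancy :: "(nat \<Rightarrow> 's \<Rightarrow> 'a pmf) \<Rightarrow> ('s \<Rightarrow> 'a \<Rightarrow> 's) \<Rightarrow> nat \<Rightarrow> 's \<Rightarrow> nat \<Rightarrow> 's \<Rightarrow> 'a \<Rightarrow> real" where
  "occupancy pol f T s1 t s a = measure_pmf.prob (episode pol f T s1) {\<tau>. \<tau> ! (t - 1) = (s, a)}"

fun iid_pmf :: "'b pmf \<Rightarrow> nat \<Rightarrow> 'b list pmf" where
  "iid_pmf p 0 = return_pmf []"
| "iid_pmf p (Suc n) = bind_pmf p (\<lambda>x. bind_pmf (iid_pmf p n) (\<lambda>xs. return_pmf (x # xs)))"

definition covers :: "('s \<times> 'a) list list \<Rightarrow> bool" where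
  "covers taus \<longleftrightarrow> (\<forall>sa. \<exists>\<tau>\<in>set taus. sa \<in> set \<tau>)"

definition covering_length :: "(nat \<Rightarrow> 's \<Rightarrow> 'a pmf) \<Rightarrow> ('s \<Rightarrow> 'a \<Rightarrow> 's) \<Rightarrow> nat \<Rightarrow> 's \<Rightarrow> nat" where
  "covering_length pol f T s1 =
     (LEAST n. measure_pmf.prob (iid_pmf (episode pol f T s1) n) {taus. covers taus} \<ge> 1 / 2)"

end

theory Submission
  imports Defs
begin

lemma iid_emeasure:
  "emeasure (measure_pmf (iid_pmf p n)) {taus. \<forall>\<tau>\<in>set taus. Q \<tau>} = emeasure (measure_pmf p) {\<tau>. Q \<tau>} ^ n"
proof (induction n)
  case 0 then show ?case by simp
next
  case (Suc n)
  have ind: "\<And>x xs. indicator {taus. \<forall>\<tau>\<in>set taus. Q \<tau>} (x # xs) = (indicator {\<tau>. Q \<tau>} x * indicator {taus. \<forall>\<tau>\<in>set taus. Q \<tau>} xs :: ennreal)"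
    by (simp add: indicator_def)
  have "emeasure (measure_pmf (iid_pmf p (Suc n))) {taus. \<forall>\<tau>\<in>set taus. Q \<tau>}
     = (\<integral>\<^sup>+x. \<integral>\<^sup>+xs. indicator {\<tau>. Q \<tau>} x * indicator {taus. \<forall>\<tau>\<in>set taus. Q \<tau>} xs \<partial>measure_pmf (iid_pmf p n) \<partial>measure_pmf p)"
    by (simp add: ind)
  also have "\<dots> = (\<integral>\<^sup>+x. indicator {\<tau>. Q \<tau>} x * emeasure (measure_pmf (iid_pmf p n)) {taus. \<forall>\<tau>\<in>set taus. Q \<tau>} \<partial>measure_pmf p)"
    by (simp add: nn_integral_cmult)
  also have "\<dots> = emeasure (measure_pmf p) {\<tau>. Q \<tau>} * emeasure (measure_pmf (iid_pmf p n)) {taus. \<forall>\<tau>\<in>set taus. Q \<tau>}"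
    by (simp add: nn_integral_multc)
  also have "\<dots> = emeasure (measure_pmf p) {\<tau>. Q \<tau>} ^ Suc n"
    unfolding Suc.IH by simp
  finally show ?case .
qed

lemma iid_prob:
  "measure_pmf.prob (iid_pmf p n) {taus. \<forall>\<tau>\<in>set taus. Q \<tau>} = measure_pmf.prob p {\<tau>. Q \<tau>} ^ n"
  using iid_emeasure[of p n Q]
  by (simp add: measure_pmf.emeasure_eq_measure ennreal_power)

lemma len_episode_from: "\<tau> \<in> set_pmf (episode_from pol f t n s) \<Longrightarrow> length \<tau> = n"
  by (induction n arbitrary: t s \<tau>) auto


lemma len_episode: "\<tau> \<in> set_pmf (episode pol f T s1) \<Longrightarrow> length \<tau> = T"
  unfolding episode_def by (rule len_episode_from)

lemma occ_le_vis:
  assumes "t \<in> {1..T}"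
  shows "occupancy pol f T s1 t s a \<le> measure_pmf.prob (episode pol f T s1) {\<tau>. (s,a) \<in> set \<tau>}"
proof -
  let ?E = "episode pol f T s1"
  have "occupancy pol f T s1 t s a = measure_pmf.prob ?E ({\<tau>. \<tau> ! (t - 1) = (s, a)} \<inter> set_pmf ?E)"
    unfolding occupancy_def by (rule measure_Int_set_pmf[symmetric])
  also have "\<dots> \<le> measure_pmf.prob ?E {\<tau>. (s,a) \<in> set \<tau>}"
  proof (rule measure_pmf.finite_measure_mono)
    show "{\<tau>. \<tau> ! (t - 1) = (s, a)} \<inter> set_pmf ?E \<subseteq> {\<tau>. (s,a) \<in> set \<tau>}"
    proof
      fix \<tau> assume h: "\<tau> \<in> {\<tau>. \<tau> ! (t - 1) = (s, a)} \<inter> set_pmf ?E"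
      then have "\<tau> \<in> set_pmf ?E" by simp
      then have "length \<tau> = T" by (rule len_episode)
      then have "t - 1 < length \<tau>" using assms by auto
      then have "\<tau> ! (t - 1) \<in> set \<tau>" by (rule nth_mem)
      moreover have "\<tau> ! (t - 1) = (s, a)" using h by simp
      ultimately show "\<tau> \<in> {\<tau>. (s,a) \<in> set \<tau>}" by simp
    qed
  qed simp
  finally show ?thesis .
qed

lemma vis_le_sum:
  "measure_pmf.prob (episode pol f T s1) {\<tau>. (s,a) \<in> set \<tau>} \<le> (\<Sum>t\<in>{1..T}. occupancy pol f T s1 t s a)"
proof -
  let ?E = "episode pol f T s1"
  have "measure_pmf.prob ?E {\<tau>. (s,a) \<in> set \<tau>} = measure_pmf.prob ?E ({\<tau>. (s,a) \<in> set \<tau>} \<inter> set_pmf ?E)"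
    by (rule measure_Int_set_pmf[symmetric])
  also have "\<dots> \<le> measure_pmf.prob ?E (\<Union>t\<in>{1..T}. {\<tau>. \<tau> ! (t - 1) = (s, a)})"
  proof (rule measure_pmf.finite_measure_mono)
    show "{\<tau>. (s,a) \<in> set \<tau>} \<inter> set_pmf ?E \<subseteq> (\<Union>t\<in>{1..T}. {\<tau>. \<tau> ! (t - 1) = (s, a)})"
    proof
      fix \<tau> assume h: "\<tau> \<in> {\<tau>. (s,a) \<in> set \<tau>} \<inter> set_pmf ?E"
      then have "\<tau> \<in> set_pmf ?E" by simp
      then have l: "length \<tau> = T" by (rule len_episode)
      from h obtain i where "i < length \<tau>" "\<tau> ! i = (s,a)" by (auto simp: in_set_conv_nth)
      then show "\<tau> \<in> (\<Union>t\<in>{1..T}. {\<tau>. \<tau> ! (t - 1) = (s, a)})" using l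
        by (intro UN_I[of "Suc i"]) auto
    qed
  qed simp
  also have "\<dots> \<le> (\<Sum>t\<in>{1..T}. measure_pmf.prob ?E {\<tau>. \<tau> ! (t - 1) = (s, a)})"
    by (rule measure_pmf.finite_measure_subadditive_finite) auto
  finally show ?thesis unfolding occupancy_def by simp
qed

lemma prob_notvis: "measure_pmf.prob E {\<tau>. x \<notin> set \<tau>} = 1 - measure_pmf.prob E {\<tau>. x \<in> set \<tau>}"
proof -
  have e: "{\<tau>. x \<notin> set \<tau>} = space (measure_pmf E) - {\<tau>. x \<in> set \<tau>}" by auto
  show ?thesis unfolding e by (rule measure_pmf.prob_compl) simp
qed

lemma notcover_bound:
  fixes E :: "('s::finite \<times> 'a::finite) list pmf"
  shows "measure_pmf.prob (iid_pmf E n) {taus. \<not> covers taus}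
      \<le> (\<Sum>sa\<in>UNIV. (1 - measure_pmf.prob E {\<tau>. sa \<in> set \<tau>}) ^ n)"
proof -
  have e: "{taus. \<not> covers taus} = (\<Union>sa\<in>UNIV. {taus. \<forall>\<tau>\<in>set taus. sa \<notin> set \<tau>})"
    unfolding covers_def by auto
  have "measure_pmf.prob (iid_pmf E n) {taus. \<not> covers taus}
      \<le> (\<Sum>sa\<in>UNIV. measure_pmf.prob (iid_pmf E n) {taus. \<forall>\<tau>\<in>set taus. sa \<notin> set \<tau>})"
    unfolding e by (rule measure_pmf.finite_measure_subadditive_finite) auto
  also have "\<dots> = (\<Sum>sa\<in>UNIV. (1 - measure_pmf.prob E {\<tau>. sa \<in> set \<tau>}) ^ n)"
    by (simp add: iid_prob prob_notvis)
  finally show ?thesis .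
qed

lemma cover_compl:
  "measure_pmf.prob P {taus. covers taus} = 1 - measure_pmf.prob P {taus. \<not> covers taus}"
proof -
  have e: "{taus. \<not> covers taus} = space (measure_pmf P) - {taus. covers taus}" by auto
  have "measure_pmf.prob P (space (measure_pmf P) - {taus. covers taus}) = 1 - measure_pmf.prob P {taus. covers taus}"
    by (rule measure_pmf.prob_compl) simp
  then show ?thesis unfolding e by simp
qed

lemma cover_upper:
  "measure_pmf.prob (iid_pmf E n) {taus. covers taus} \<le> 1 - (1 - measure_pmf.prob E {\<tau>. sa \<in> set \<tau>}) ^ n"
proof -
  have "{taus. covers taus} \<subseteq> space (measure_pmf (iid_pmf E n)) - {taus. \<forall>\<tau>\<in>set taus. sa \<notin> set \<tau>}"
    unfolding covers_def by (cases sa) auto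
  then have "measure_pmf.prob (iid_pmf E n) {taus. covers taus} \<le> measure_pmf.prob (iid_pmf E n) (space (measure_pmf (iid_pmf E n)) - {taus. \<forall>\<tau>\<in>set taus. sa \<notin> set \<tau>})"
    by (intro measure_pmf.finite_measure_mono) auto
  also have "\<dots> = 1 - measure_pmf.prob (iid_pmf E n) {taus. \<forall>\<tau>\<in>set taus. sa \<notin> set \<tau>}"
    by (rule measure_pmf.prob_compl) simp
  finally show ?thesis by (simp add: iid_prob prob_notvis)
qed


lemma lower_aux:
  fixes p m :: real and L :: nat
  assumes "0 \<le> p" "p \<le> m" "0 < m" "p \<le> 1" "(1 - p) ^ L \<le> 1/2"
  shows "ln 2 / (2 * m) \<le> real L"
proof -
  have L0: "L \<noteq> 0" using assms(5) by (cases L) auto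
  show ?thesis
  proof (cases "p > 1/2")
    case True
    have "ln 2 / (2 * m) \<le> ln 2 / 1"
      using True assms by (intro divide_left_mono) auto
    also have "\<dots> \<le> 1" using ln_2_less_1 by simp
    also have "1 \<le> real L" using L0 by simp
    finally show ?thesis .
  next
    case False
    then have p2: "p \<le> 1/2" by simp
    have pos: "0 < 1 - p" using p2 by simp
    have "real L * ln (1 - p) = ln ((1 - p) ^ L)" using pos by (simp add: ln_realpow)
    also have "\<dots> \<le> ln (1/2)" using assms(5) pos by (subst ln_le_cancel_iff) auto
    also have "\<dots> = - ln 2" by (simp add: ln_div)
    finally have a: "real L * ln (1 - p) \<le> - ln 2" .
    have "- p - 2 * p\<^sup>2 \<le> ln (1 - p)" using ln_one_minus_pos_lower_bound[OF assms(1) p2] .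
    moreover have "- 2 * p \<le> - p - 2 * p\<^sup>2" using p2 assms(1) using mult_left_mono[of "2*p" 1 p] by (simp add: power2_eq_square algebra_simps)
    ultimately have "- 2 * p \<le> ln (1 - p)" by linarith
    then have "real L * (- 2 * p) \<le> real L * ln (1 - p)" by (intro mult_left_mono) auto
    moreover have "real L * (- 2 * p) = - (2 * p * real L)" by simp
    ultimately have "ln 2 \<le> 2 * p * real L" using a by linarith
    also have "\<dots> \<le> 2 * m * real L" using assms by (intro mult_right_mono) auto
    finally have "ln 2 \<le> 2 * m * real L" .
    then have "ln 2 / (2 * m) \<le> (2 * m * real L) / (2 * m)"
      using assms(3) by (intro divide_right_mono) auto
    also have "\<dots> = real L" using assms(3) by simp
    finally show ?thesis .
  qed
qed

lemma upper_aux: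
  fixes q K :: real and N :: nat
  assumes "0 < q" "q \<le> 1" "1 \<le> K" "ln (2 * K) \<le> q * real N"
  shows "K * (1 - q) ^ N \<le> 1/2"
proof -
  have "(1 - q) ^ N \<le> exp (- q) ^ N"
    using assms by (intro power_mono) (auto simp: exp_ge_add_one_self[of "-q", simplified])
  also have "\<dots> = exp (- (q * real N))" by (simp add: exp_of_nat_mult[symmetric] mult.commute)
  also have "\<dots> \<le> exp (- ln (2 * K))" using assms(4) by simp
  also have "\<dots> = 1 / (2 * K)" using assms(3) by (simp add: exp_minus inverse_eq_divide)
  finally have "(1 - q) ^ N \<le> 1 / (2 * K)" .
  then have "K * (1 - q) ^ N \<le> K * (1 / (2 * K))" using assms(3) by (intro mult_left_mono) auto
  also have "\<dots> = 1/2" using assms(3) by simp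
  finally show ?thesis .
qed

theorem mainTheorem11:
  fixes pol :: "nat \<Rightarrow> 's::finite \<Rightarrow> 'a::finite pmf"
    and f :: "'s \<Rightarrow> 'a \<Rightarrow> 's" and T :: nat and s1 :: 's
  assumes "\<forall>s a. \<exists>t\<in>{1..T}. occupancy pol f T s1 t s a > 0"
  shows "ln 2 / (2 * Min ((\<lambda>(s, a). \<Sum>t\<in>{1..T}. occupancy pol f T s1 t s a) ` UNIV))
           \<le> real (covering_length pol f T s1)
         \<and> real (covering_length pol f T s1)
           \<le> of_int \<lceil>ln (2 * real CARD('s) * real CARD('a))
                   / Min ((\<lambda>(s, a). Max ((\<lambda>t. occupancy pol f T s1 t s a) ` {1..T})) ` UNIV)\<rceil>"
proof -
  define E where "E = episode pol f T s1"
  define vis where "vis = (\<lambda>sa::'s \<times> 'a. measure_pmf.prob E {\<tau>. sa \<in> set \<tau>})"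
  define m where "m = (\<lambda>(s, a). \<Sum>t\<in>{1..T}. occupancy pol f T s1 t s a)"
  define q where "q = (\<lambda>(s, a). Max ((\<lambda>t. occupancy pol f T s1 t s a) ` {1..T}))"
  define mm where "mm = Min (m ` UNIV)"
  define qq where "qq = Min (q ` UNIV)"
  define L where "L = covering_length pol f T s1"
  define K where "K = real CARD('s) * real CARD('a)"
  have occ_nn: "\<And>t s a. 0 \<le> occupancy pol f T s1 t s a" unfolding occupancy_def by simp
  have vis1: "\<And>sa. vis sa \<le> 1" "\<And>sa. 0 \<le> vis sa" unfolding vis_def by simp_all
  have q_le: "q (s, a) \<le> vis (s, a)" for s a
  proof -
    obtain t where t: "t \<in> {1..T}" "occupancy pol f T s1 t s a > 0" using assms by blast
    have ne: "{1..T} \<noteq> {}" using t by auto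
    have "q (s, a) \<in> (\<lambda>t. occupancy pol f T s1 t s a) ` {1..T}"
      unfolding q_def using ne by (simp add: Max_in)
    then obtain t' where t': "t' \<in> {1..T}" "q (s, a) = occupancy pol f T s1 t' s a" by auto
    show ?thesis unfolding vis_def E_def t'(2) by (rule occ_le_vis[OF t'(1)])
  qed
  have q_pos: "q (s, a) > 0" for s a
  proof -
    obtain t where t: "t \<in> {1..T}" "occupancy pol f T s1 t s a > 0" using assms by blast
    have "occupancy pol f T s1 t s a \<le> q (s, a)"
      unfolding q_def using t by (simp add: Max_ge)
    then show ?thesis using t by linarith
  qed
  have m_pos: "m (s, a) > 0" for s a
  proof -
    obtain t where t: "t \<in> {1..T}" "occupancy pol f T s1 t s a > 0" using assms by blast
    have "occupancy pol f T s1 t s a \<le> (\<Sum>t\<in>{1..T}. occupancy pol f T s1 t s a)"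
      by (rule member_le_sum[OF t(1)]) (simp_all add: occ_nn)
    then have "occupancy pol f T s1 t s a \<le> m (s, a)" unfolding m_def by simp
    then show ?thesis using t by linarith
  qed
  have vis_le_m: "vis (s, a) \<le> m (s, a)" for s a
    unfolding vis_def m_def E_def using vis_le_sum by simp
  have qq_in: "qq \<in> q ` UNIV" unfolding qq_def by (rule Min_in) auto
  have qq_pos: "0 < qq" using qq_in q_pos by auto
  have qq_le: "qq \<le> vis sa" for sa
  proof -
    have "qq \<le> q sa" unfolding qq_def by (rule Min_le) auto
    then show ?thesis using q_le[of "fst sa" "snd sa"] by simp
  qed
  have qq1: "qq \<le> 1" using qq_le[of undefined] vis1(1)[of undefined] by linarith
  have c1: "0 < CARD('s)" "0 < CARD('a)" by simp_all
  then have c2: "1 \<le> real CARD('s)" "1 \<le> real CARD('a)" by simp_all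
  have K1: "1 \<le> K" unfolding K_def
    using mult_mono[OF c2] by simp
  have lnpos: "0 < ln (2 * K)" using K1 by simp
  define c where "c = \<lceil>ln (2 * K) / qq\<rceil>"
  have hpos: "0 < ln (2 * K) / qq" using lnpos qq_pos by simp
  then have "-1 < ln (2 * K) / qq" by linarith
  then have c_nn: "0 \<le> c" unfolding c_def by simp
  define N where "N = nat c"
  have N_eq: "real N = real_of_int c" unfolding N_def using c_nn by simp
  have "ln (2 * K) / qq \<le> real N" unfolding N_eq c_def by (rule le_of_int_ceiling)
  then have "ln (2 * K) \<le> real N * qq" by (simp only: pos_divide_le_eq[OF qq_pos])
  then have qN: "ln (2 * K) \<le> qq * real N" by (simp only: mult.commute)
  have "measure_pmf.prob (iid_pmf E N) {taus. \<not> covers taus} \<le> (\<Sum>sa\<in>UNIV. (1 - vis sa) ^ N)"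
    unfolding vis_def by (rule notcover_bound)
  also have "\<dots> \<le> (\<Sum>sa\<in>(UNIV::('s\<times>'a) set). (1 - qq) ^ N)"
  proof (rule sum_mono)
    fix sa :: "'s \<times> 'a"
    have "qq \<le> vis sa" "vis sa \<le> 1" by (rule qq_le, rule vis1(1))
    then show "(1 - vis sa) ^ N \<le> (1 - qq) ^ N" by (intro power_mono) auto
  qed
  also have "\<dots> = K * (1 - qq) ^ N"
  proof -
    have "card (UNIV \<times> UNIV :: ('s \<times> 'a) set) = CARD('s) * CARD('a)" by (rule card_cartesian_product)
    then have cardp: "CARD('s \<times> 'a) = CARD('s) * CARD('a)" by simp
    show ?thesis unfolding K_def by (simp add: cardp)
  qed
  also have "\<dots> \<le> 1/2" by (rule upper_aux[OF qq_pos qq1 K1 qN])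
  finally have goodN: "1/2 \<le> measure_pmf.prob (iid_pmf E N) {taus. covers taus}"
    using cover_compl[of "iid_pmf E N"] by linarith
  define P where "P = (\<lambda>n. 1/2 \<le> measure_pmf.prob (iid_pmf E n) {taus. covers taus})"
  have Ldef: "L = (LEAST n. P n)" unfolding L_def covering_length_def P_def E_def by (rule refl)
  have PN: "P N" unfolding P_def by (rule goodN)
  have LleN: "L \<le> N" unfolding Ldef by (rule Least_le[of P N, OF PN])
  have "P L" unfolding Ldef by (rule LeastI[of P N, OF PN])
  then have goodL: "1/2 \<le> measure_pmf.prob (iid_pmf E L) {taus. covers taus}" unfolding P_def .
  have mm_in: "mm \<in> m ` UNIV" unfolding mm_def by (rule Min_in) auto
  then obtain s0 a0 where sa0: "mm = m (s0, a0)" by auto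
  have "1/2 \<le> 1 - (1 - vis (s0, a0)) ^ L"
    using goodL cover_upper[of E L "(s0,a0)"] unfolding vis_def by linarith
  then have pw: "(1 - vis (s0, a0)) ^ L \<le> 1/2" by linarith
  have low: "ln 2 / (2 * mm) \<le> real L"
    unfolding sa0 by (rule lower_aux[OF vis1(2) vis_le_m m_pos vis1(1) pw])
  have up: "real L \<le> of_int c" using LleN N_eq by simp
  have eK: "2 * real CARD('s) * real CARD('a) = 2 * K" unfolding K_def by (simp add: mult.assoc)
  show ?thesis
    unfolding eK m_def[symmetric] q_def[symmetric] mm_def[symmetric] qq_def[symmetric]
      L_def[symmetric] c_def[symmetric]
    using low up by (rule conjI)
qed


end
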